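(* If $\ell\ge 5$ is divisible by three, then the uniform Tur\'an density of the tight $3$-uniform cycle $C_\ell^{(3)}$ is equal to zero.
   Context: For $\ell\ge 5$, the tight $3$-uniform cycle $C_\ell^{(3)}$ is the $3$-uniform hypergraph with $\ell$ vertices $v_1,\ldots,v_\ell$ whose edges are exactly the triples $\{v_i,v_{i+1},v_{i+2}\}$, $i\in[\ell]$, indices modulo $\ell$. For an $n$-vertex $3$-uniform hypergraph $H$ and $\varepsilon>0$, the $\varepsilon$-linear density of $H$ is the minimum edge density of an induced subhypergraph of $H$ with at least $\varepsilon n$ vertices. The uniform Tur\'an density of a $3$-uniform hypergraph $F$ is the supremum of all $d\in[0,1]$ such that for every $\varepsilon>0$ there exist arbitrarily large $F$-free $3$-uniform hypergraphs with $\varepsilon$-linear density at least $d$. *)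

theory Defs
  imports Main Complex_Main
begin

definition uniform3 :: "nat set \<Rightarrow> nat set set \<Rightarrow> bool" where
  "uniform3 V E \<longleftrightarrow> finite V \<and> (\<forall>e\<in>E. e \<subseteq> V \<and> card e = 3)"

definition tight_cycle_edges :: "nat \<Rightarrow> nat set set" where
  "tight_cycle_edges l = {{i, (i + 1) mod l, (i + 2) mod l} | i. i < l}"

definition contains_copy :: "nat set \<Rightarrow> nat set set \<Rightarrow> nat set \<Rightarrow> nat set set \<Rightarrow> bool" where
  "contains_copy VH EH VF EF \<longleftrightarrow>
     (\<exists>f. inj_on f VF \<and> f ` VF \<subseteq> VH \<and> (\<forall>e\<in>EF. f ` e \<in> EH))"

definition edge_density :: "nat set set \<Rightarrow> nat set \<Rightarrow> real" where
  "edge_density E S = real (card {e\<in>E. e \<subseteq> S}) / real (card S choose 3)"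

definition linear_density_ge :: "real \<Rightarrow> nat set \<Rightarrow> nat set set \<Rightarrow> real \<Rightarrow> bool" where
  "linear_density_ge \<epsilon> V E d \<longleftrightarrow>
     (\<forall>S. S \<subseteq> V \<and> real (card S) \<ge> \<epsilon> * real (card V) \<longrightarrow> edge_density E S \<ge> d)"

definition uniform_turan_density :: "nat set \<Rightarrow> nat set set \<Rightarrow> real" where
  "uniform_turan_density VF EF = Sup {d. 0 \<le> d \<and> d \<le> 1 \<and>
     (\<forall>\<epsilon>>0. \<forall>N. \<exists>n\<ge>N. \<exists>E. uniform3 {..<n} E \<and> \<not> contains_copy {..<n} E VF EF
        \<and> linear_density_ge \<epsilon> {..<n} E d)}"

end

theory Submission
  imports Defs
begin

lemma cheb_set:
  fixes a :: "'i \<Rightarrow> real"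
  assumes "finite I" "\<And>i. i \<in> I \<Longrightarrow> a i \<ge> 0"
  shows "(\<Sum>i\<in>I. a i ^ t) * (\<Sum>i\<in>I. a i) \<le> real (card I) * (\<Sum>i\<in>I. a i ^ Suc t)"
proof -
  let ?S = "(\<Sum>j\<in>I. (\<Sum>k\<in>I. (a j ^ t - a k ^ t) * (a j - a k)))"
  have "2 * (real (card I) * (\<Sum>j\<in>I. (a j ^ t * a j)) - (\<Sum>j\<in>I. a j ^ t) * (\<Sum>k\<in>I. a k)) = ?S"
    by (simp only: one_add_one[symmetric] algebra_simps)
      (simp add: algebra_simps sum_subtractf sum.distrib sum.swap[of "\<lambda>i j. a i ^ t * a j"] sum.swap[of "\<lambda>i j. a j * a i ^ t"] sum_distrib_left sum_distrib_right)
  moreover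
  { fix i j assume "i \<in> I" "j \<in> I"
    hence "(a i ^ t - a j ^ t) * (a i - a j) \<ge> 0"
      using assms power_mono[of "a i" "a j" t] power_mono[of "a j" "a i" t]
      by (cases "a i \<le> a j") (auto simp: mult_nonneg_nonneg mult_nonpos_nonpos) }
  then have "?S \<ge> 0"
    by (auto intro!: sum_nonneg)
  ultimately show ?thesis by (simp add: algebra_simps)
qed

lemma power_mean_set:
  fixes a :: "'i \<Rightarrow> real"
  assumes "finite I" "\<And>i. i \<in> I \<Longrightarrow> a i \<ge> 0"
  shows "(\<Sum>i\<in>I. a i) ^ Suc t \<le> real (card I) ^ t * (\<Sum>i\<in>I. a i ^ Suc t)"
proof (induction t)
  case 0
  then show ?case by simp
next
  case (Suc t)
  have s: "(\<Sum>i\<in>I. a i) \<ge> 0" using assms by (simp add: sum_nonneg)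
  have "(\<Sum>i\<in>I. a i) ^ Suc (Suc t) = (\<Sum>i\<in>I. a i) ^ Suc t * (\<Sum>i\<in>I. a i)" by simp
  also have "\<dots> \<le> real (card I) ^ t * (\<Sum>i\<in>I. a i ^ Suc t) * (\<Sum>i\<in>I. a i)"
    using Suc s by (rule mult_right_mono)
  also have "\<dots> \<le> real (card I) ^ t * (real (card I) * (\<Sum>i\<in>I. a i ^ Suc (Suc t)))"
    using cheb_set[OF assms, where t="Suc t"] by (simp add: mult.assoc mult_left_mono)
  finally show ?case by (simp add: algebra_simps)
qed

definition ls :: "nat \<Rightarrow> 'a set \<Rightarrow> 'a list set" where
  "ls t A = {xs. set xs \<subseteq> A \<and> length xs = t}"

lemma finite_ls: "finite A \<Longrightarrow> finite (ls t A)"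
  unfolding ls_def by (rule finite_lists_length_eq)

lemma card_ls: "finite A \<Longrightarrow> card (ls t A) = card A ^ t"
  unfolding ls_def by (rule card_lists_length_eq)

lemma step_count:
  fixes \<alpha> :: real
  assumes A: "finite A" and B: "finite B" and al: "\<alpha> \<ge> 0"
    and h: "real (card (SIGMA b:B. {a\<in>A. R a b})) \<ge> \<alpha> * card A * card B"
  shows "real (card (SIGMA b:B. ls (Suc t) {a\<in>A. R a b})) \<ge> \<alpha> ^ Suc t * card A ^ Suc t * card B"
proof -
  define D where "D b = real (card {a\<in>A. R a b})" for b
  have c1: "real (card (SIGMA b:B. {a\<in>A. R a b})) = (\<Sum>b\<in>B. D b)"
    using A B by (simp add: card_SigmaI D_def)
  have c2: "real (card (SIGMA b:B. ls (Suc t) {a\<in>A. R a b})) = (\<Sum>b\<in>B. D b ^ Suc t)"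
    using A B by (simp add: card_SigmaI D_def card_ls finite_ls)
  show ?thesis
  proof (cases "card B = 0")
    case True then show ?thesis using c2 by (simp add: D_def sum_nonneg)
  next
    case False
    then have Bp: "real (card B) > 0" by simp
    have "(\<alpha> * card A * card B) ^ Suc t \<le> (\<Sum>b\<in>B. D b) ^ Suc t"
      using h c1 al by (intro power_mono) auto
    also have "\<dots> \<le> real (card B) ^ t * (\<Sum>b\<in>B. D b ^ Suc t)"
      using B by (intro power_mean_set) (auto simp: D_def)
    finally have "real (card B) ^ t * (\<alpha> ^ Suc t * card A ^ Suc t * card B) \<le> real (card B) ^ t * (\<Sum>b\<in>B. D b ^ Suc t)"
      by (simp add: power_mult_distrib algebra_simps)
    then have "\<alpha> ^ Suc t * card A ^ Suc t * card B \<le> (\<Sum>b\<in>B. D b ^ Suc t)"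
      using Bp by (simp add: mult_le_cancel_left_pos)
    then show ?thesis using c2 by simp
  qed
qed

lemma core_count:
  fixes E :: "nat set set" and \<alpha> :: real and t n :: nat
  assumes U: "uniform3 {..<n} E" and al: "\<alpha> > 0"
    and cE: "real (card E) \<ge> \<alpha> * real n ^ 3"
  defines "V \<equiv> {..<n}"
  defines "T \<equiv> Suc t"
  shows "real (card (SIGMA q:(ls T V \<times> ls T V). ls T {z\<in>V. \<forall>x\<in>set (fst q). \<forall>y\<in>set (snd q). {x,y,z}\<in>E}))
          \<ge> \<alpha> ^ (T*T*T) * real n ^ (3*T)"
proof -
  have fV: "finite V" and cV: "card V = n" by (auto simp: V_def)
  define S0 where "S0 = (SIGMA p:V\<times>V. {x\<in>V. {x, fst p, snd p} \<in> E})"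
  have fS0: "finite S0" unfolding S0_def using fV by auto
  have "E \<subseteq> (\<lambda>(p,x). {x, fst p, snd p}) ` S0"
  proof
    fix e assume e: "e \<in> E"
    then have "card e = 3" "e \<subseteq> V" using U by (auto simp: uniform3_def V_def)
    then obtain x y z where "e = {x,y,z}" "x \<in> V" "y \<in> V" "z \<in> V"
      by (auto simp: card_3_iff)
    then show "e \<in> (\<lambda>(p,x). {x, fst p, snd p}) ` S0"
      using e unfolding S0_def by (auto intro!: rev_image_eqI[of "((y,z),x)"])
  qed
  then have "card E \<le> card S0"
    using fS0 by (meson card_image_le card_mono finite_imageI le_trans)
  then have h0: "real (card S0) \<ge> \<alpha> * card V * card (V \<times> V)"
    using cE cV by (simp add: card_cartesian_product power3_eq_cube algebra_simps)
  have s1: "real (card (SIGMA p:V\<times>V. ls T {x\<in>V. {x, fst p, snd p} \<in> E}))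
       \<ge> \<alpha> ^ T * card V ^ T * card (V \<times> V)"
    using h0[unfolded S0_def] fV al unfolding T_def
    by (intro step_count[where R="\<lambda>x p. {x, fst p, snd p} \<in> E"]) auto
  define S1' where "S1' = (SIGMA q:ls T V \<times> V. {y\<in>V. \<forall>x\<in>set (fst q). {x,y,snd q}\<in>E})"
  have "S1' = (\<lambda>(p,xs). ((xs, snd p), fst p)) ` (SIGMA p:V\<times>V. ls T {x\<in>V. {x, fst p, snd p} \<in> E})"
    unfolding S1'_def by (auto simp: ls_def image_iff Bex_def)
  moreover have "inj_on (\<lambda>(p,xs). ((xs, snd p), fst p)) (SIGMA p:V\<times>V. ls T {x\<in>V. {x, fst p, snd p} \<in> E})"
    by (auto simp: inj_on_def)
  ultimately have "card S1' = card (SIGMA p:V\<times>V. ls T {x\<in>V. {x, fst p, snd p} \<in> E})"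
    by (simp add: card_image)
  then have h1: "real (card S1') \<ge> \<alpha> ^ T * card V * card (ls T V \<times> V)"
    using s1 fV by (simp add: card_cartesian_product card_ls algebra_simps power2_eq_square)
  have s2: "real (card (SIGMA q:ls T V \<times> V. ls T {y\<in>V. \<forall>x\<in>set (fst q). {x,y,snd q}\<in>E}))
       \<ge> (\<alpha> ^ T) ^ T * card V ^ T * card (ls T V \<times> V)"
    using h1[unfolded S1'_def] fV al unfolding T_def
    by (intro step_count[where R="\<lambda>y q. \<forall>x\<in>set (fst q). {x,y,snd q}\<in>E"]) (auto simp: finite_ls)
  define S2' where "S2' = (SIGMA q:ls T V \<times> ls T V. {z\<in>V. \<forall>x\<in>set (fst q). \<forall>y\<in>set (snd q). {x,y,z}\<in>E})"
  have "S2' = (\<lambda>(q,ys). ((fst q, ys), snd q)) ` (SIGMA q:ls T V \<times> V. ls T {y\<in>V. \<forall>x\<in>set (fst q). {x,y,snd q}\<in>E})"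
    unfolding S2'_def by (auto simp: ls_def image_iff Bex_def)
  moreover have "inj_on (\<lambda>(q,ys). ((fst q, ys), snd q)) (SIGMA q:ls T V \<times> V. ls T {y\<in>V. \<forall>x\<in>set (fst q). {x,y,snd q}\<in>E})"
    by (auto simp: inj_on_def)
  ultimately have "card S2' = card (SIGMA q:ls T V \<times> V. ls T {y\<in>V. \<forall>x\<in>set (fst q). {x,y,snd q}\<in>E})"
    by (simp add: card_image)
  then have h2: "real (card S2') \<ge> (\<alpha> ^ T) ^ T * card V * card (ls T V \<times> ls T V)"
    using s2 fV by (simp add: card_cartesian_product card_ls algebra_simps)
  have s3: "real (card (SIGMA q:(ls T V \<times> ls T V). ls T {z\<in>V. \<forall>x\<in>set (fst q). \<forall>y\<in>set (snd q). {x,y,z}\<in>E}))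
          \<ge> ((\<alpha> ^ T) ^ T) ^ T * card V ^ T * card (ls T V \<times> ls T V)"
    using h2[unfolded S2'_def] fV al unfolding T_def
    by (intro step_count[where R="\<lambda>z q. \<forall>x\<in>set (fst q). \<forall>y\<in>set (snd q). {x,y,z}\<in>E"]) (auto simp: finite_ls)
  have "((\<alpha> ^ T) ^ T) ^ T * card V ^ T * card (ls T V \<times> ls T V) = \<alpha> ^ (T*T*T) * real n ^ (3*T)"
    using fV cV by (simp add: card_cartesian_product card_ls power_mult[symmetric] power_add[symmetric]
        mult.commute numeral_3_eq_3)
  then show ?thesis using s3 by simp
qed

lemma card_dist_bound:
  fixes n T :: nat
  assumes "T \<le> n" "n > 0"
  shows "real n * real (card (ls T {..<n} - {xs. distinct xs})) \<le> real T ^ 2 * real n ^ T"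
proof -
  have fin: "finite (ls T {..<n})" by (simp add: finite_ls)
  have eqD: "ls T {..<n} \<inter> {xs. distinct xs} = {xs. length xs = T \<and> distinct xs \<and> set xs \<subseteq> {..<n}}"
    by (auto simp: ls_def)
  have cD: "card (ls T {..<n} \<inter> {xs. distinct xs}) = \<Prod>{n - T + 1 .. n}"
    unfolding eqD using assms by (subst card_lists_distinct_length_eq) auto
  have "(\<Prod>i\<in>{n - T + 1 .. n}. n - T) \<le> \<Prod>{n - T + 1 .. n}"
    by (intro prod_mono) auto
  moreover have "card {n - T + 1 .. n} = T" using assms by simp
  ultimately have pD: "(n - T) ^ T \<le> card (ls T {..<n} \<inter> {xs. distinct xs})"
    using cD by simp
  have cB: "card (ls T {..<n} - {xs. distinct xs}) = n ^ T - card (ls T {..<n} \<inter> {xs. distinct xs})"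
    using fin by (simp add: card_Diff_subset_Int card_ls Diff_eq[symmetric] Int_commute)
  have le: "card (ls T {..<n} \<inter> {xs. distinct xs}) \<le> n ^ T"
    using fin card_mono[OF fin, of "ls T {..<n} \<inter> {xs. distinct xs}"] by (simp add: card_ls)
  have np: "real n > 0" using assms by simp
  have "-1 \<le> - (real T / real n)" using assms by simp
  from Bernoulli_inequality[OF this, of T]
  have b: "1 - real T * (real T / real n) \<le> (1 - real T / real n) ^ T" by simp
  have "(1 - real T / real n) ^ T * real n ^ T = (real n - real T) ^ T"
    using np by (simp add: power_mult_distrib[symmetric] field_simps)
  moreover have "(1 - real T * (real T / real n)) * real n ^ T * real n = real n ^ T * real n - real T ^ 2 * real n ^ T"
    using np by (simp add: field_simps power2_eq_square)
  moreover have "(1 - real T * (real T / real n)) * real n ^ T * real n \<le> (1 - real T / real n) ^ T * real n ^ T * real n"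
    using b np by (intro mult_right_mono) auto
  ultimately have "real n ^ T * real n - real T ^ 2 * real n ^ T \<le> (real n - real T) ^ T * real n" by simp
  moreover have "(real n - real T) ^ T \<le> real (card (ls T {..<n} \<inter> {xs. distinct xs}))"
  proof -
    have "real ((n - T) ^ T) \<le> real (card (ls T {..<n} \<inter> {xs. distinct xs}))"
      using pD by (simp only: of_nat_le_iff)
    then show ?thesis using assms by (simp add: of_nat_diff)
  qed
  ultimately have k: "real n ^ T * real n - real T ^ 2 * real n ^ T \<le> real (card (ls T {..<n} \<inter> {xs. distinct xs})) * real n"
    using np by (smt (verit) mult_right_mono)
  have "real (card (ls T {..<n} - {xs. distinct xs})) = real n ^ T - real (card (ls T {..<n} \<inter> {xs. distinct xs}))"
    using cB le by (simp add: of_nat_diff)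
  then have "real n * real (card (ls T {..<n} - {xs. distinct xs})) = real n * real n ^ T - real n * real (card (ls T {..<n} \<inter> {xs. distinct xs}))"
    by (simp add: right_diff_distrib)
  then show ?thesis using k by (simp add: algebra_simps)
qed

lemma find_distinct:
  fixes E :: "nat set set" and \<alpha> :: real and t n :: nat
  assumes U: "uniform3 {..<n} E" and al: "\<alpha> > 0"
    and cE: "real (card E) \<ge> \<alpha> * real n ^ 3"
    and nT: "Suc t \<le> n"
    and big: "real n * \<alpha> ^ (Suc t * Suc t * Suc t) > 3 * real (Suc t) ^ 2"
  shows "\<exists>xs ys zs. xs \<in> ls (Suc t) {..<n} \<and> ys \<in> ls (Suc t) {..<n} \<and> zs \<in> ls (Suc t) {..<n}
     \<and> distinct xs \<and> distinct ys \<and> distinct zs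
     \<and> (\<forall>x\<in>set xs. \<forall>y\<in>set ys. \<forall>z\<in>set zs. {x,y,z} \<in> E)"
proof (rule ccontr)
  assume nex: "\<not> ?thesis"
  define T where "T = Suc t"
  define V where "V = {..<n}"
  define L where "L = ls T V"
  define B where "B = L - {xs. distinct xs}"
  define S3 where "S3 = (SIGMA q:(ls T V \<times> ls T V). ls T {z\<in>V. \<forall>x\<in>set (fst q). \<forall>y\<in>set (snd q). {x,y,z}\<in>E})"
  have c3: "real (card S3) \<ge> \<alpha> ^ (T*T*T) * real n ^ (3*T)"
    unfolding S3_def T_def V_def by (rule core_count[OF U al cE])
  have fL: "finite L" unfolding L_def V_def by (simp add: finite_ls)
  have cL: "card L = n ^ T" unfolding L_def V_def by (simp add: card_ls)
  have fB: "finite B" using fL unfolding B_def by simp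
  have sub: "S3 \<subseteq> ((B \<times> L) \<times> L) \<union> ((L \<times> B) \<times> L) \<union> ((L \<times> L) \<times> B)"
  proof
    fix w assume w: "w \<in> S3"
    obtain xs ys zs where wq: "w = ((xs,ys),zs)" by (metis prod.collapse)
    have inL: "xs \<in> L" "ys \<in> L" "zs \<in> L" using w unfolding wq S3_def L_def by (auto simp: ls_def)
    have good: "\<forall>x\<in>set xs. \<forall>y\<in>set ys. \<forall>z\<in>set zs. {x,y,z} \<in> E" using w unfolding wq S3_def by (auto simp: ls_def)
    have "\<not> (distinct xs \<and> distinct ys \<and> distinct zs)"
      using nex inL good unfolding L_def V_def T_def by blast
    then show "w \<in> ((B \<times> L) \<times> L) \<union> ((L \<times> B) \<times> L) \<union> ((L \<times> L) \<times> B)"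
      using inL unfolding wq B_def by auto
  qed
  have "card S3 \<le> card (((B \<times> L) \<times> L) \<union> ((L \<times> B) \<times> L) \<union> ((L \<times> L) \<times> B))"
    using fL fB by (intro card_mono[OF _ sub]) auto
  also have "\<dots> \<le> card ((B \<times> L) \<times> L) + card ((L \<times> B) \<times> L) + card ((L \<times> L) \<times> B)"
    by (meson card_Un_le le_trans add_le_mono order_refl)
  also have "\<dots> = 3 * (card B * n ^ T * n ^ T)"
    by (simp add: card_cartesian_product cL)
  finally have "real (card S3) \<le> real (3 * (card B * n ^ T * n ^ T))"
    by (simp only: of_nat_le_iff)
  then have "real (card S3) \<le> 3 * (real (card B) * real n ^ T * real n ^ T)"
    by simp
  then have "real n * real (card S3) \<le> 3 * ((real n * real (card B)) * real n ^ T * real n ^ T)"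
    by (simp add: algebra_simps mult_left_mono)
  also have "\<dots> \<le> 3 * ((real T ^ 2 * real n ^ T) * real n ^ T * real n ^ T)"
    using card_dist_bound[of T n] nT unfolding B_def L_def V_def T_def
    by (intro mult_left_mono mult_right_mono) auto
  finally have A1: "real n * real (card S3) \<le> 3 * real T ^ 2 * real n ^ (3*T)"
    by (simp add: algebra_simps power_add numeral_3_eq_3)
  have np: "real n > 0" using nT by simp
  have "real n * (\<alpha> ^ (T*T*T) * real n ^ (3*T)) \<le> real n * real (card S3)"
    using c3 np by (simp add: mult_left_mono)
  with A1 have "(real n * \<alpha> ^ (T*T*T)) * real n ^ (3*T) \<le> (3 * real T ^ 2) * real n ^ (3*T)"
    by (simp add: algebra_simps)
  then have "real n * \<alpha> ^ (T*T*T) \<le> 3 * real T ^ 2"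
    using np by (simp add: mult_le_cancel_right_pos)
  then show False using big unfolding T_def by simp
qed

lemma copy_from_lists:
  fixes E :: "nat set set" and t n :: nat
  assumes U: "uniform3 {..<n} E"
    and L: "xs \<in> ls (Suc t) {..<n}" "ys \<in> ls (Suc t) {..<n}" "zs \<in> ls (Suc t) {..<n}"
    and D: "distinct xs" "distinct ys" "distinct zs"
    and G: "\<forall>x\<in>set xs. \<forall>y\<in>set ys. \<forall>z\<in>set zs. {x,y,z} \<in> E"
  shows "contains_copy {..<n} E {..<3 * Suc t} (tight_cycle_edges (3 * Suc t))"
proof -
  define l where "l = 3 * Suc t"
  define f where "f i = (if i mod 3 = 0 then xs else if i mod 3 = 1 then ys else zs) ! (i div 3)" for i
  have len: "length xs = Suc t" "length ys = Suc t" "length zs = Suc t" using L by (auto simp: ls_def)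
  have setV: "set xs \<subseteq> {..<n}" "set ys \<subseteq> {..<n}" "set zs \<subseteq> {..<n}" using L by (auto simp: ls_def)
  have c3: "\<And>x y z. {x,y,z} \<in> E \<Longrightarrow> x \<noteq> y \<and> y \<noteq> z \<and> x \<noteq> z"
  proof -
    fix x y z assume "{x,y,z} \<in> E"
    then have "card {x,y,z} = 3" using U by (auto simp: uniform3_def)
    then show "x \<noteq> y \<and> y \<noteq> z \<and> x \<noteq> z"
      by (auto simp: card_insert_if split: if_splits)
  qed
  have ne: "xs ! 0 \<in> set xs" "ys ! 0 \<in> set ys" "zs ! 0 \<in> set zs" using len by auto
  have dxy: "\<And>x y. x \<in> set xs \<Longrightarrow> y \<in> set ys \<Longrightarrow> x \<noteq> y" using G c3 ne by blast
  have dyz: "\<And>y z. y \<in> set ys \<Longrightarrow> z \<in> set zs \<Longrightarrow> y \<noteq> z" using G c3 ne by blast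
  have dxz: "\<And>x z. x \<in> set xs \<Longrightarrow> z \<in> set zs \<Longrightarrow> x \<noteq> z" using G c3 ne by blast
  have mem: "(j mod 3 = 0 \<longrightarrow> f j \<in> set xs) \<and> (j mod 3 = 1 \<longrightarrow> f j \<in> set ys) \<and> (j mod 3 = 2 \<longrightarrow> f j \<in> set zs)"
    if "j < l" for j
  proof -
    have "j div 3 < Suc t" using that unfolding l_def by (simp add: div_less_iff_less_mult mult.commute)
    then show ?thesis using len unfolding f_def by auto
  qed
  have m3: "j mod 3 = 0 \<or> j mod 3 = 1 \<or> j mod 3 = 2" for j :: nat by linarith
  have inj: "inj_on f {..<l}"
  proof (rule inj_onI)
    fix i j assume i: "i \<in> {..<l}" and j: "j \<in> {..<l}" and fij: "f i = f j"
    have id: "i div 3 < Suc t" "j div 3 < Suc t" using i j unfolding l_def by auto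
    show "i = j"
    proof (cases "i mod 3 = j mod 3")
      case True
      then have "(if i mod 3 = 0 then xs else if i mod 3 = 1 then ys else zs) ! (i div 3) =
                 (if i mod 3 = 0 then xs else if i mod 3 = 1 then ys else zs) ! (j div 3)"
        using fij unfolding f_def by simp
      then have "i div 3 = j div 3"
        using D len id by (auto simp: nth_eq_iff_index_eq)
      then show ?thesis using True by (metis div_mult_mod_eq)
    next
      case False
      then show ?thesis using mem[of i] mem[of j] i j m3[of i] m3[of j] fij dxy dyz dxz
        by (metis lessThan_iff)
    qed
  qed
  have img: "f ` {..<l} \<subseteq> {..<n}"
  proof
    fix v assume "v \<in> f ` {..<l}"
    then obtain j where "j < l" "v = f j" by auto
    then show "v \<in> {..<n}" using mem[of j] m3[of j] setV by (metis subsetD)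
  qed
  have edges: "\<forall>e\<in>tight_cycle_edges l. f ` e \<in> E"
  proof
    fix e assume "e \<in> tight_cycle_edges l"
    then obtain i where i: "i < l" and e: "e = {i, (i + 1) mod l, (i + 2) mod l}"
      unfolding tight_cycle_edges_def by auto
    have d3: "3 dvd l" unfolding l_def by simp
    have r1: "((i + 1) mod l) mod 3 = (i + 1) mod 3" using d3 by (simp add: mod_mod_cancel)
    have r2: "((i + 2) mod l) mod 3 = (i + 2) mod 3" using d3 by (simp add: mod_mod_cancel)
    have lp: "l > 0" unfolding l_def by simp
    have b1: "(i + 1) mod l < l" "(i + 2) mod l < l" using lp by auto
    have fe: "f ` e = {f i, f ((i + 1) mod l), f ((i + 2) mod l)}" unfolding e by simp
    have "i mod 3 = 0 \<or> i mod 3 = 1 \<or> i mod 3 = 2" by (rule m3)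
    then show "f ` e \<in> E"
    proof (elim disjE)
      assume h: "i mod 3 = 0"
      then have "(i+1) mod 3 = 1" "(i+2) mod 3 = 2" by presburger+
      then have "f i \<in> set xs" "f ((i + 1) mod l) \<in> set ys" "f ((i + 2) mod l) \<in> set zs"
        using mem[OF i] mem[OF b1(1)] mem[OF b1(2)] h r1 r2 by auto
      then show ?thesis using G fe by auto
    next
      assume h: "i mod 3 = 1"
      then have "(i+1) mod 3 = 2" "(i+2) mod 3 = 0" by presburger+
      then have "f i \<in> set ys" "f ((i + 1) mod l) \<in> set zs" "f ((i + 2) mod l) \<in> set xs"
        using mem[OF i] mem[OF b1(1)] mem[OF b1(2)] h r1 r2 by auto
      then have "{f ((i + 2) mod l), f i, f ((i + 1) mod l)} \<in> E" using G by auto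
      then show ?thesis using fe by (simp add: insert_commute)
    next
      assume h: "i mod 3 = 2"
      then have "(i+1) mod 3 = 0" "(i+2) mod 3 = 1" by presburger+
      then have "f i \<in> set zs" "f ((i + 1) mod l) \<in> set xs" "f ((i + 2) mod l) \<in> set ys"
        using mem[OF i] mem[OF b1(1)] mem[OF b1(2)] h r1 r2 by auto
      then have "{f ((i + 1) mod l), f ((i + 2) mod l), f i} \<in> E" using G by auto
      then show ?thesis using fe by (simp add: insert_commute)
    qed
  qed
  show ?thesis unfolding contains_copy_def l_def[symmetric]
    using inj img edges by blast
qed

lemma choose3: "6 * ((n + 2) choose 3) = (n + 2) * (n + 1) * n"
proof (induction n)
  case 0 then show ?case by (simp add: numeral_3_eq_3)
next
  case (Suc n)
  have "Suc n + 2 = Suc (n + 2)" by simp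
  then have "((Suc n + 2) choose 3) = ((n + 2) choose 2) + ((n + 2) choose 3)"
    by (simp add: numeral_3_eq_3 numeral_2_eq_2)
  moreover have "2 * ((n + 2) choose 2) = (n + 2) * (n + 1)"
    by (simp add: choose_two)
  ultimately show ?case using Suc by (simp add: algebra_simps)
qed

lemma choose3_bound:
  assumes "n \<ge> 7"
  shows "real (n choose 3) \<ge> real n ^ 3 / 12"
proof -
  obtain m where m: "n = m + 2" using assms by (metis add.commute le_add_diff_inverse2 le_trans nat_le_linear numeral_le_iff semiring_norm(68) semiring_norm(72) semiring_norm(78) trans_le_add2)
  have "real (6 * (n choose 3)) = real ((m + 2) * (m + 1) * m)" using choose3[of m] m by simp
  then have e: "6 * real (n choose 3) = (real m + 2) * (real m + 1) * real m" by (simp add: algebra_simps)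
  have mm: "real m \<ge> 5" using assms m by simp
  have "(real m + 2) ^ 3 \<le> 2 * ((real m + 2) * (real m + 1) * real m)"
  proof -
    have "real m * real m \<ge> 5 * 5" using mm by (intro mult_mono) auto
    then have "real m * real m * real m \<ge> (5 * 5) * real m" using mm by (intro mult_right_mono) auto
    moreover have "(real m + 2) ^ 3 = real m * real m * real m + 6 * (real m * real m) + 12 * real m + 8"
      by (simp add: power3_eq_cube algebra_simps)
    moreover have "2 * ((real m + 2) * (real m + 1) * real m) = 2 * (real m * real m * real m) + 6 * (real m * real m) + 4 * real m"
      by (simp add: algebra_simps)
    ultimately show ?thesis using mm by linarith
  qed
  moreover have "real n = real m + 2" using m by simp
  ultimately show ?thesis using e by (simp add: field_simps)
qed

lemma dense_contains:
  fixes d :: real and t :: nat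
  assumes dp: "d > 0"
  shows "\<exists>N. \<forall>n\<ge>N. \<forall>E. uniform3 {..<n} E \<longrightarrow> linear_density_ge 1 {..<n} E d \<longrightarrow>
           contains_copy {..<n} E {..<3 * Suc t} (tight_cycle_edges (3 * Suc t))"
proof -
  define T where "T = Suc t"
  define \<alpha> where "\<alpha> = d / 12"
  have al: "\<alpha> > 0" using dp by (simp add: \<alpha>_def)
  define \<beta> where "\<beta> = \<alpha> ^ (T*T*T)"
  have bp: "\<beta> > 0" using al by (simp add: \<beta>_def)
  define N where "N = 7 + T + nat \<lceil>3 * real T ^ 2 / \<beta>\<rceil>"
  show ?thesis
  proof (intro exI allI impI)
    fix n E assume nN: "N \<le> n" and U: "uniform3 {..<n} E" and LD: "linear_density_ge 1 {..<n} E d"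
    have n7: "n \<ge> 7" and nT: "Suc t \<le> n" using nN by (auto simp: N_def T_def)
    have "real n \<ge> real (nat \<lceil>3 * real T ^ 2 / \<beta>\<rceil>) + 7" using nN by (simp add: N_def)
    moreover have "real (nat \<lceil>3 * real T ^ 2 / \<beta>\<rceil>) \<ge> 3 * real T ^ 2 / \<beta>"
      by linarith
    ultimately have "real n > 3 * real T ^ 2 / \<beta>" by linarith
    then have big: "real n * \<beta> > 3 * real T ^ 2" using bp by (simp add: field_simps)
    have "edge_density E {..<n} \<ge> d" using LD unfolding linear_density_ge_def by auto
    moreover have "{e\<in>E. e \<subseteq> {..<n}} = E" using U by (auto simp: uniform3_def)
    ultimately have ed: "real (card E) / real (n choose 3) \<ge> d" by (simp add: edge_density_def)
    have cb: "real (n choose 3) \<ge> real n ^ 3 / 12" using choose3_bound[OF n7] .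
    have cpos: "real n ^ 3 / 12 > 0" using n7 by simp
    have "real (card E) \<ge> d * real (n choose 3)"
    proof -
      have "real (n choose 3) > 0" using cb cpos by linarith
      then show ?thesis using ed by (simp add: pos_le_divide_eq)
    qed
    moreover have "d * real (n choose 3) \<ge> d * (real n ^ 3 / 12)"
      using cb dp by (simp add: mult_left_mono)
    ultimately have cE: "real (card E) \<ge> \<alpha> * real n ^ 3" by (simp add: \<alpha>_def)
    from find_distinct[OF U al cE nT] big
    obtain xs ys zs where "xs \<in> ls (Suc t) {..<n}" "ys \<in> ls (Suc t) {..<n}" "zs \<in> ls (Suc t) {..<n}"
      "distinct xs" "distinct ys" "distinct zs" "\<forall>x\<in>set xs. \<forall>y\<in>set ys. \<forall>z\<in>set zs. {x,y,z} \<in> E"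
      unfolding \<beta>_def T_def by (auto simp: mult.commute)
    then show "contains_copy {..<n} E {..<3 * Suc t} (tight_cycle_edges (3 * Suc t))"
      using copy_from_lists[OF U] by blast
  qed
qed

theorem proposition2p2:
  fixes l :: nat
  assumes "l \<ge> 5" and "3 dvd l"
  shows "uniform_turan_density {..<l} (tight_cycle_edges l) = 0"
proof -
  obtain t where lt: "l = 3 * Suc t"
  proof -
    obtain k where k: "l = 3 * k" using assms(2) by blast
    then have "k \<ge> 1" using assms(1) by simp
    then show ?thesis using k that by (metis Suc_pred' less_eq_Suc_le One_nat_def)
  qed
  define D where "D = {d. 0 \<le> d \<and> d \<le> 1 \<and>
     (\<forall>\<epsilon>>0. \<forall>N. \<exists>n\<ge>N. \<exists>E. uniform3 {..<n} E \<and> \<not> contains_copy {..<n} E {..<l} (tight_cycle_edges l)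
        \<and> linear_density_ge \<epsilon> {..<n} E d)}"
  have ne: "tight_cycle_edges l \<noteq> {}" using assms(1) unfolding tight_cycle_edges_def by (auto intro!: exI[of _ 0])
  have "0 \<in> D"
    unfolding D_def
  proof (intro CollectI conjI allI impI)
    fix \<epsilon> :: real and N :: nat assume "\<epsilon> > 0"
    have "uniform3 {..<N} {}" by (simp add: uniform3_def)
    moreover have "\<not> contains_copy {..<N} {} {..<l} (tight_cycle_edges l)"
      using ne unfolding contains_copy_def by auto
    moreover have "linear_density_ge \<epsilon> {..<N} {} 0"
      by (simp add: linear_density_ge_def edge_density_def)
    ultimately show "\<exists>n\<ge>N. \<exists>E. uniform3 {..<n} E \<and> \<not> contains_copy {..<n} E {..<l} (tight_cycle_edges l)
        \<and> linear_density_ge \<epsilon> {..<n} E 0" by blast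
  qed auto
  moreover have "d = 0" if "d \<in> D" for d
  proof (rule ccontr)
    assume "d \<noteq> 0"
    with that have dp: "d > 0" by (simp add: D_def)
    obtain N where hN: "\<forall>n\<ge>N. \<forall>E. uniform3 {..<n} E \<longrightarrow> linear_density_ge 1 {..<n} E d \<longrightarrow>
           contains_copy {..<n} E {..<3 * Suc t} (tight_cycle_edges (3 * Suc t))"
      using dense_contains[OF dp] by blast
    from that obtain n E where "n \<ge> N" "uniform3 {..<n} E" "\<not> contains_copy {..<n} E {..<l} (tight_cycle_edges l)"
        "linear_density_ge 1 {..<n} E d"
      unfolding D_def by force
    then show False using hN lt by blast
  qed
  ultimately have "D = {0}" by blast
  then show ?thesis unfolding uniform_turan_density_def D_def[symmetric] by simp
qed

end
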